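(* There is a deterministic algorithm which, given a set $P$ of $n$ elements and access to a query oracle for a poset $(P,\succ)$ of width at most $w$, finds the set of minimal elements of $(P,\succ)$ using at most $wn$ queries and total complexity $O(wn)$.
   Context: A poset $(P,\succ)$ consists of a set $P$ and an irreflexive, transitive relation $\succ$. Elements $a,b$ are incomparable if neither $a\succ b$ nor $b\succ a$; the width is the maximum size of a set of mutually incomparable elements. An element $a$ is minimal if there is no $b$ with $a\succ b$. A query oracle answers a query on $(x,y)$ by reporting whether $x\succ y$, $y\succ x$, or they are incomparable. Total complexity counts all computational operations (queries and basic operations). *)

theory Defs
  imports Main
begin

definition is_poset :: "'a set \<Rightarrow> ('a \<Rightarrow> 'a \<Rightarrow> bool) \<Rightarrow> bool" where
  "is_poset P gt \<longleftrightarrow> (\<forall>x\<in>P. \<not> gt x x) \<and>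
     (\<forall>x\<in>P. \<forall>y\<in>P. \<forall>z\<in>P. gt x y \<and> gt y z \<longrightarrow> gt x z)"

definition incomparable :: "('a \<Rightarrow> 'a \<Rightarrow> bool) \<Rightarrow> 'a \<Rightarrow> 'a \<Rightarrow> bool" where
  "incomparable gt a b \<longleftrightarrow> \<not> gt a b \<and> \<not> gt b a"

definition antichain :: "('a \<Rightarrow> 'a \<Rightarrow> bool) \<Rightarrow> 'a set \<Rightarrow> bool" where
  "antichain gt A \<longleftrightarrow> (\<forall>a\<in>A. \<forall>b\<in>A. a \<noteq> b \<longrightarrow> incomparable gt a b)"

definition width :: "'a set \<Rightarrow> ('a \<Rightarrow> 'a \<Rightarrow> bool) \<Rightarrow> nat" where
  "width P gt = Max {card A | A. A \<subseteq> P \<and> antichain gt A}"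

definition minimal_elements :: "'a set \<Rightarrow> ('a \<Rightarrow> 'a \<Rightarrow> bool) \<Rightarrow> 'a set" where
  "minimal_elements P gt = {a \<in> P. \<not> (\<exists>b\<in>P. gt a b)}"

text \<open>A program is a fixed finite list of instructions acting on list registers
  (indexed by nat) holding elements of the ground set.  Elements are opaque: the only way
  to learn about them is the query instruction Cmp, which asks the oracle about the heads
  of two registers.  Every executed instruction costs one unit (total complexity);
  every executed Cmp on two nonempty registers is one oracle query.\<close>

datatype instr =
    Move nat nat
  | Drop nat
  | IfEmpty nat nat
  | Cmp nat nat nat nat nat
  | Goto nat
  | Halt

type_synonym 'a config = "nat \<times> (nat \<Rightarrow> 'a list)"

definition halted :: "instr list \<Rightarrow> 'a config \<Rightarrow> bool" where
  "halted prog cfg \<longleftrightarrow> fst cfg \<ge> length prog \<or> prog ! fst cfg = Halt"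

fun exec_instr :: "('a \<Rightarrow> 'a \<Rightarrow> bool) \<Rightarrow> instr \<Rightarrow> 'a config \<Rightarrow> 'a config" where
  "exec_instr gt (Move i j) (pc, R) =
     (Suc pc, (case R i of [] \<Rightarrow> R | x # xs \<Rightarrow> R(i := xs, j := x # (R(i := xs)) j)))"
| "exec_instr gt (Drop i) (pc, R) = (Suc pc, R(i := tl (R i)))"
| "exec_instr gt (IfEmpty i l) (pc, R) = ((if R i = [] then l else Suc pc), R)"
| "exec_instr gt (Cmp i j l1 l2 l3) (pc, R) =
     ((if R i = [] \<or> R j = [] then l3
       else if gt (hd (R i)) (hd (R j)) then l1
       else if gt (hd (R j)) (hd (R i)) then l2
       else l3), R)"
| "exec_instr gt (Goto l) (pc, R) = (l, R)"
| "exec_instr gt Halt cfg = cfg"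

definition step :: "instr list \<Rightarrow> ('a \<Rightarrow> 'a \<Rightarrow> bool) \<Rightarrow> 'a config \<Rightarrow> 'a config" where
  "step prog gt cfg = (if halted prog cfg then cfg else exec_instr gt (prog ! fst cfg) cfg)"

definition exec :: "instr list \<Rightarrow> ('a \<Rightarrow> 'a \<Rightarrow> bool) \<Rightarrow> nat \<Rightarrow> 'a config \<Rightarrow> 'a config" where
  "exec prog gt t cfg = (step prog gt ^^ t) cfg"

definition is_query :: "instr list \<Rightarrow> 'a config \<Rightarrow> bool" where
  "is_query prog cfg \<longleftrightarrow> \<not> halted prog cfg \<and>
     (\<exists>i j l1 l2 l3. prog ! fst cfg = Cmp i j l1 l2 l3 \<and> snd cfg i \<noteq> [] \<and> snd cfg j \<noteq> [])"

definition queries :: "instr list \<Rightarrow> ('a \<Rightarrow> 'a \<Rightarrow> bool) \<Rightarrow> nat \<Rightarrow> 'a config \<Rightarrow> nat" where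
  "queries prog gt t cfg = card {s. s < t \<and> is_query prog (exec prog gt s cfg)}"

definition init_config :: "'a list \<Rightarrow> 'a config" where
  "init_config xs = (0, (\<lambda>_. [])(0 := xs))"

definition output_of :: "'a config \<Rightarrow> 'a set" where
  "output_of cfg = set (snd cfg 1)"

end

theory Submission
  imports Defs
begin

definition P7 :: "instr list" where
  "P7 = [IfEmpty 0 13, IfEmpty 1 9, Cmp 0 1 7 5 3, Move 1 2, Goto 1, Drop 1, Goto 1,
         Drop 0, Goto 10, Move 0 1, IfEmpty 2 0, Move 2 1, Goto 10, Halt]"

definition regs :: "'a list \<Rightarrow> 'a list \<Rightarrow> 'a list \<Rightarrow> nat \<Rightarrow> 'a list" where
  "regs a b c = (\<lambda>_. [])(0:=a, 1:=b, 2:=c)"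

lemma regs_simps[simp]:
  "regs a b c 0 = a" "regs a b c 1 = b" "regs a b c 2 = c"
  "regs a b c (Suc 0) = b" "regs a b c (Suc (Suc 0)) = c"
  "(regs a b c)(Suc 0 := b') = regs a b' c"
  "(regs a b c)(Suc (Suc 0) := c') = regs a b c'"
  "(regs a b c)(0 := a') = regs a' b c"
  "(regs a b c)(1 := b') = regs a b' c"
  "(regs a b c)(2 := c') = regs a b c'"
  by (auto simp: regs_def fun_eq_iff)

definition reach :: "('a \<Rightarrow> 'a \<Rightarrow> bool) \<Rightarrow> 'a config \<Rightarrow> nat \<Rightarrow> nat \<Rightarrow> 'a config \<Rightarrow> bool" where
  "reach gt c t q c' \<longleftrightarrow> exec P7 gt t c = c' \<and> queries P7 gt t c = q"

lemma exec_Suc: "exec prog gt (Suc t) c = exec prog gt t (step prog gt c)"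
  unfolding exec_def by (simp only: funpow_Suc_right o_apply)

lemma queries_Suc:
  "queries prog gt (Suc t) c = (if is_query prog c then 1 else 0) + queries prog gt t (step prog gt c)"
proof -
  let ?Q = "\<lambda>s. is_query prog (exec prog gt s c)"
  let ?Q' = "\<lambda>s. is_query prog (exec prog gt s (step prog gt c))"
  have eq: "{s. s < Suc t \<and> ?Q s} = (if ?Q 0 then {0} else {}) \<union> Suc ` {s. s < t \<and> ?Q' s}"
  proof (intro set_eqI iffI)
    fix s assume "s \<in> {s. s < Suc t \<and> ?Q s}"
    then show "s \<in> (if ?Q 0 then {0} else {}) \<union> Suc ` {s. s < t \<and> ?Q' s}"
      by (cases s) (auto simp: exec_Suc)
  next
    fix s assume "s \<in> (if ?Q 0 then {0} else {}) \<union> Suc ` {s. s < t \<and> ?Q' s}"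
    then show "s \<in> {s. s < Suc t \<and> ?Q s}"
      by (auto simp: exec_Suc split: if_splits)
  qed
  have "card {s. s < Suc t \<and> ?Q s} = (if ?Q 0 then 1 else 0) + card {s. s < t \<and> ?Q' s}"
    unfolding eq by (auto simp: card_image)
  then show ?thesis unfolding queries_def by (simp add: exec_def)
qed

lemma reach_trans: "reach gt c1 t1 q1 c2 \<Longrightarrow> reach gt c2 t2 q2 c3 \<Longrightarrow> reach gt c1 (t1+t2) (q1+q2) c3"
  unfolding reach_def
proof (induction t1 arbitrary: c1 q1)
  case 0
  then show ?case by (simp add: exec_def queries_def)
next
  case (Suc t1)
  then show ?case by (auto simp: exec_Suc queries_Suc)
qed

lemma reach1: "reach gt c 1 (if is_query P7 c then 1 else 0) (step P7 gt c)"
  unfolding reach_def using queries_Suc[of P7 gt 0 c] exec_Suc[of P7 gt 0 c]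
  by (simp add: exec_def queries_def)

lemma reach1': "c' = step P7 gt c \<Longrightarrow> q = (if is_query P7 c then 1 else 0) \<Longrightarrow> t = 1 \<Longrightarrow> reach gt c t q c'"
  using reach1 by blast


lemma restore: "reach gt (10, regs a L acc) (3*length acc + 1) 0 (0, regs a (rev acc @ L) [])"
proof (induction acc arbitrary: L)
  case Nil
  show ?case apply simp by (rule reach1', simp_all add: step_def halted_def is_query_def P7_def)
next
  case (Cons y acc)
  have 1: "reach gt (10, regs a L (y#acc)) 1 0 (11, regs a L (y#acc))" by (rule reach1', simp_all add: step_def halted_def is_query_def P7_def)
  have 2: "reach gt (11, regs a L (y#acc)) 1 0 (12, regs a (y#L) acc)" by (rule reach1', simp_all add: step_def halted_def is_query_def P7_def)
  have 3: "reach gt (12, regs a (y#L) acc) 1 0 (10, regs a (y#L) acc)" by (rule reach1', simp_all add: step_def halted_def is_query_def P7_def)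
  have e: "3*length (y#acc) + 1 = 1+1+1+(3*length acc+1)" by simp
  from reach_trans[OF reach_trans[OF reach_trans[OF 1 2] 3] Cons.IH[of "y#L"]]
  show ?case unfolding e by simp
qed

lemma pack: "reach gt c t q c' \<Longrightarrow> t \<le> T \<Longrightarrow> q \<le> Q \<Longrightarrow> \<exists>t q. reach gt c t q c' \<and> t \<le> T \<and> q \<le> Q"
  by blast

fun scanf :: "('a \<Rightarrow> 'a \<Rightarrow> bool) \<Rightarrow> 'a \<Rightarrow> 'a list \<Rightarrow> 'a list \<Rightarrow> 'a list" where
  "scanf gt x [] acc = rev acc @ [x]"
| "scanf gt x (m#ms) acc = (if gt x m then rev acc @ m # ms
     else if gt m x then scanf gt x ms acc else scanf gt x ms (m#acc))"

lemma scan: "\<exists>t q. reach gt (1, regs (x#rest) ms acc) t q (0, regs rest (scanf gt x ms acc) [])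
   \<and> t \<le> 7*length ms + 3*length acc + 3 \<and> q \<le> length ms"
proof (induction ms arbitrary: acc)
  case Nil
  have 1: "reach gt (1, regs (x#rest) [] acc) 1 0 (9, regs (x#rest) [] acc)" by (rule reach1', simp_all add: step_def halted_def is_query_def P7_def)
  have 2: "reach gt (9, regs (x#rest) [] acc) 1 0 (10, regs rest [x] acc)" by (rule reach1', simp_all add: step_def halted_def is_query_def P7_def)
  from reach_trans[OF reach_trans[OF 1 2] restore] show ?case by auto
next
  case (Cons m ms)
  have 1: "reach gt (1, regs (x#rest) (m#ms) acc) 1 0 (2, regs (x#rest) (m#ms) acc)" by (rule reach1', simp_all add: step_def halted_def is_query_def P7_def)
  show ?case
  proof (cases "gt x m")
    case True
    have 2: "reach gt (2, regs (x#rest) (m#ms) acc) 1 1 (7, regs (x#rest) (m#ms) acc)"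
      by (rule reach1', simp_all add: True step_def halted_def is_query_def P7_def)
    have 3: "reach gt (7, regs (x#rest) (m#ms) acc) 1 0 (8, regs rest (m#ms) acc)" by (rule reach1', simp_all add: step_def halted_def is_query_def P7_def)
    have 4: "reach gt (8, regs rest (m#ms) acc) 1 0 (10, regs rest (m#ms) acc)" by (rule reach1', simp_all add: step_def halted_def is_query_def P7_def)
    note R = reach_trans[OF reach_trans[OF reach_trans[OF reach_trans[OF 1 2] 3] 4] restore]
    have sf: "scanf gt x (m#ms) acc = rev acc @ m # ms" using True by simp
    show ?thesis unfolding sf by (rule pack[OF R]) (auto simp: True)
  next
    case F: False
    show ?thesis
    proof (cases "gt m x")
      case True
      have 2: "reach gt (2, regs (x#rest) (m#ms) acc) 1 1 (5, regs (x#rest) (m#ms) acc)"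
        by (rule reach1', simp_all add: True F step_def halted_def is_query_def P7_def)
      have 3: "reach gt (5, regs (x#rest) (m#ms) acc) 1 0 (6, regs (x#rest) ms acc)" by (rule reach1', simp_all add: step_def halted_def is_query_def P7_def)
      have 4: "reach gt (6, regs (x#rest) ms acc) 1 0 (1, regs (x#rest) ms acc)" by (rule reach1', simp_all add: step_def halted_def is_query_def P7_def)
      obtain t q where IH: "reach gt (1, regs (x#rest) ms acc) t q (0, regs rest (scanf gt x ms acc) [])"
        "t \<le> 7*length ms + 3*length acc + 3" "q \<le> length ms" using Cons.IH by blast
      note R = reach_trans[OF reach_trans[OF reach_trans[OF reach_trans[OF 1 2] 3] 4] IH(1)]
      have sf: "scanf gt x (m#ms) acc = scanf gt x ms acc" using True F by simp
      show ?thesis unfolding sf by (rule pack[OF R]) (use True F IH(2,3) in auto)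
    next
      case False
      have 2: "reach gt (2, regs (x#rest) (m#ms) acc) 1 1 (3, regs (x#rest) (m#ms) acc)"
        by (rule reach1', simp_all add: False F step_def halted_def is_query_def P7_def)
      have 3: "reach gt (3, regs (x#rest) (m#ms) acc) 1 0 (4, regs (x#rest) ms (m#acc))" by (rule reach1', simp_all add: step_def halted_def is_query_def P7_def)
      have 4: "reach gt (4, regs (x#rest) ms (m#acc)) 1 0 (1, regs (x#rest) ms (m#acc))" by (rule reach1', simp_all add: step_def halted_def is_query_def P7_def)
      obtain t q where IH: "reach gt (1, regs (x#rest) ms (m#acc)) t q (0, regs rest (scanf gt x ms (m#acc)) [])"
        "t \<le> 7*length ms + 3*length (m#acc) + 3" "q \<le> length ms" using Cons.IH by blast
      note R = reach_trans[OF reach_trans[OF reach_trans[OF reach_trans[OF 1 2] 3] 4] IH(1)]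
      have sf: "scanf gt x (m#ms) acc = scanf gt x ms (m#acc)" using False F by simp
      show ?thesis unfolding sf by (rule pack[OF R]) (use False F IH(2,3) in auto)
    qed
  qed
qed

lemma scanf_set:
  assumes po: "is_poset P gt" and xP: "x \<in> P"
  shows "set ms \<union> set acc \<subseteq> P \<Longrightarrow> antichain gt (set ms \<union> set acc) \<Longrightarrow> \<forall>a\<in>set acc. \<not> gt a x \<Longrightarrow>
    set (scanf gt x ms acc) = (if \<exists>m\<in>set ms. gt x m then set ms \<union> set acc
                               else insert x {m \<in> set ms \<union> set acc. \<not> gt m x})"
proof (induction ms arbitrary: acc)
  case Nil
  then show ?case by auto
next
  case (Cons m ms)
  have irr: "\<not> gt y y" if "y \<in> P" for y using po that unfolding is_poset_def by blast
  have tr: "gt a c" if "gt a b" "gt b c" "a \<in> P" "b \<in> P" "c \<in> P" for a b c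
    using po that unfolding is_poset_def by blast
  show ?case
  proof (cases "gt x m")
    case True then show ?thesis by auto
  next
    case F: False
    show ?thesis
    proof (cases "gt m x")
      case True
      have IH: "set (scanf gt x ms acc) = (if \<exists>m\<in>set ms. gt x m then set ms \<union> set acc
                               else insert x {m \<in> set ms \<union> set acc. \<not> gt m x})"
        using Cons.prems by (intro Cons.IH) (auto simp: antichain_def)
      have no: "\<not> (\<exists>m'\<in>set ms. gt x m')"
      proof
        assume "\<exists>m'\<in>set ms. gt x m'"
        then obtain m' where m': "m' \<in> set ms" "gt x m'" by blast
        have "gt m m'" using tr[OF True m'(2)] xP Cons.prems(1) m' by auto
        moreover have "m \<in> P" using Cons.prems(1) by auto
        ultimately show False using irr[of m] Cons.prems(2) m'(1)
          unfolding antichain_def incomparable_def by (metis Un_iff list.set_intros(1,2))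
      qed
      show ?thesis using IH no True F by auto
    next
      case False
      have IH: "set (scanf gt x ms (m#acc)) = (if \<exists>m\<in>set ms. gt x m then set ms \<union> set (m#acc)
                               else insert x {m' \<in> set ms \<union> set (m#acc). \<not> gt m' x})"
        using Cons.prems False by (intro Cons.IH) auto
      show ?thesis using IH False F by auto
    qed
  qed
qed

lemma scanf_distinct: "distinct (ms @ acc) \<Longrightarrow> x \<notin> set ms \<union> set acc \<Longrightarrow> distinct (scanf gt x ms acc)"
  by (induction ms arbitrary: acc) auto

lemma ex_min_below:
  assumes po: "is_poset P gt" and fin: "finite D" and DP: "D \<subseteq> P" and d: "d \<in> D"
  shows "\<exists>m\<in>minimal_elements D gt. m = d \<or> gt d m"
proof -
  define S where "S = {y\<in>D. y = d \<or> gt d y}"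
  define f where "f y = card {z\<in>D. gt y z}" for y
  have "\<exists>m. m \<in> S \<and> (\<forall>y. y \<in> S \<longrightarrow> f m \<le> f y)"
    using ex_has_least_nat[of "\<lambda>y. y \<in> S" d f] d by (auto simp: S_def)
  then obtain m where mS: "m \<in> S" and least: "\<And>y. y \<in> S \<Longrightarrow> f m \<le> f y" by blast
  have irr: "\<not> gt y y" if "y \<in> P" for y using po that unfolding is_poset_def by blast
  have tr: "gt a c" if "gt a b" "gt b c" "a \<in> P" "b \<in> P" "c \<in> P" for a b c
    using po that unfolding is_poset_def by blast
  have "m \<in> minimal_elements D gt"
  proof (rule ccontr)
    assume "m \<notin> minimal_elements D gt"
    then obtain z where z: "z \<in> D" "gt m z" using mS by (auto simp: minimal_elements_def S_def)
    have mD: "m \<in> D" using mS by (auto simp: S_def)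
    have zS: "z \<in> S" using mS z tr[of d m z] d DP mD by (auto simp: S_def)
    have "{z'\<in>D. gt z z'} \<subset> {z'\<in>D. gt m z'}"
    proof
      show "{z'\<in>D. gt z z'} \<subseteq> {z'\<in>D. gt m z'}" using z tr[of m z] DP mD by auto
      show "{z'\<in>D. gt z z'} \<noteq> {z'\<in>D. gt m z'}" using z irr[of z] DP by auto
    qed
    then have "f z < f m" unfolding f_def by (intro psubset_card_mono) (auto intro: finite_subset[OF _ fin])
    with least[OF zS] show False by simp
  qed
  then show ?thesis using mS by (auto simp: S_def)
qed

lemma min_insert:
  assumes po: "is_poset P gt" and fin: "finite D" and DP: "D \<subseteq> P" and xP: "x \<in> P" and xD: "x \<notin> D"
    and M: "M = minimal_elements D gt"
  shows "minimal_elements (insert x D) gt = (if \<exists>m\<in>M. gt x m then M else insert x {m\<in>M. \<not> gt m x})"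
proof -
  have tr: "gt a c" if "gt a b" "gt b c" "a \<in> P" "b \<in> P" "c \<in> P" for a b c
    using po that unfolding is_poset_def by blast
  show ?thesis
  proof (cases "\<exists>m\<in>M. gt x m")
    case True
    then obtain m where m: "m \<in> M" "gt x m" by blast
    have "minimal_elements (insert x D) gt = M"
      using m M tr[of _ x m] xP DP unfolding minimal_elements_def by auto
    then show ?thesis using True by simp
  next
    case False
    have xmin: "\<not> gt x d" if dD: "d \<in> D" for d
    proof
      assume "gt x d"
      obtain m where "m \<in> minimal_elements D gt" "m = d \<or> gt d m" using ex_min_below[OF po fin DP dD] by blast
      then show False using False M \<open>gt x d\<close> tr[of x d m] xP DP dD
        unfolding minimal_elements_def by auto
    qed
    have "\<not> gt x x" using po xP unfolding is_poset_def by blast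
    then show ?thesis using False M xmin unfolding minimal_elements_def by auto
  qed
qed


lemma card_le_width: "finite P \<Longrightarrow> A \<subseteq> P \<Longrightarrow> antichain gt A \<Longrightarrow> card A \<le> width P gt"
  unfolding width_def
  by (rule Max_ge) (auto intro: finite_subset[of _ "card ` Pow P"])

lemma antichain_min: "antichain gt (minimal_elements D gt)"
  unfolding antichain_def incomparable_def minimal_elements_def by auto

lemma outer:
  assumes po: "is_poset P gt" and fin: "finite P" and wd: "width P gt \<le> w"
  shows "distinct ys \<Longrightarrow> set ys \<subseteq> P \<Longrightarrow> D \<subseteq> P \<Longrightarrow> set ys \<inter> D = {} \<Longrightarrow>
    set M = minimal_elements D gt \<Longrightarrow> distinct M \<Longrightarrow>
    \<exists>t q M'. reach gt (0, regs ys M []) t q (13, regs [] M' []) \<and>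
      set M' = minimal_elements (D \<union> set ys) gt \<and> t \<le> (7*w+4)*length ys + 1 \<and> q \<le> w * length ys"
proof (induction ys arbitrary: D M)
  case Nil
  have "reach gt (0, regs [] M []) 1 0 (13, regs [] M [])"
    by (rule reach1', simp_all add: step_def halted_def is_query_def P7_def)
  then show ?case using Nil by auto
next
  case (Cons x rest)
  have 1: "reach gt (0, regs (x#rest) M []) 1 0 (1, regs (x#rest) M [])"
    by (rule reach1', simp_all add: step_def halted_def is_query_def P7_def)
  obtain t1 q1 where S: "reach gt (1, regs (x#rest) M []) t1 q1 (0, regs rest (scanf gt x M []) [])"
    "t1 \<le> 7*length M + 3*length ([]::'a list) + 3" "q1 \<le> length M" using scan[of gt x rest M "[]"] by blast
  have finD: "finite D" using Cons.prems(3) fin finite_subset by blast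
  have MP: "set M \<subseteq> P" using Cons.prems(3,5) unfolding minimal_elements_def by auto
  have lenM: "length M \<le> w"
    using card_le_width[OF fin MP, of gt] antichain_min[of gt D] Cons.prems(5,6) wd
    by (metis distinct_card le_trans)
  have xP: "x \<in> P" and xD: "x \<notin> D" using Cons.prems by auto
  have xM: "x \<notin> set M" using xD Cons.prems(5) unfolding minimal_elements_def by auto
  have setM1: "set (scanf gt x M []) = minimal_elements (insert x D) gt"
    using scanf_set[OF po xP, of M "[]"] min_insert[OF po finD Cons.prems(3) xP xD Cons.prems(5)]
      MP antichain_min[of gt D] Cons.prems(5) by simp
  have dM1: "distinct (scanf gt x M [])" using scanf_distinct[of M "[]" x gt] Cons.prems(6) xM by simp
  obtain t2 q2 M' where IH: "reach gt (0, regs rest (scanf gt x M []) []) t2 q2 (13, regs [] M' [])"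
    "set M' = minimal_elements (insert x D \<union> set rest) gt" "t2 \<le> (7*w+4)*length rest + 1" "q2 \<le> w * length rest"
    using Cons.IH[of "insert x D" "scanf gt x M []"] Cons.prems setM1 dM1 by auto
  note R = reach_trans[OF reach_trans[OF 1 S(1)] IH(1)]
  show ?case
  proof (intro exI conjI)
    show "reach gt (0, regs (x # rest) M []) (1 + t1 + t2) (0 + q1 + q2) (13, regs [] M' [])" by (rule R)
    show "set M' = minimal_elements (D \<union> set (x # rest)) gt" using IH(2) by simp
    show "1 + t1 + t2 \<le> (7 * w + 4) * length (x # rest) + 1" using S(2) IH(3) lenM by simp
    show "0 + q1 + q2 \<le> w * length (x # rest)" using S(3) IH(4) lenM by simp
  qed
qed

theorem theorem7:
  "\<exists>(prog :: instr list) (c :: nat).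
     \<forall>(xs :: 'a list) (gt :: 'a \<Rightarrow> 'a \<Rightarrow> bool) (w :: nat).
       distinct xs \<and> is_poset (set xs) gt \<and> width (set xs) gt \<le> w \<longrightarrow>
       (\<exists>t. halted prog (exec prog gt t (init_config xs)) \<and>
            t \<le> c * (w * length xs + 1) \<and>
            queries prog gt t (init_config xs) \<le> w * length xs \<and>
            output_of (exec prog gt t (init_config xs)) = minimal_elements (set xs) gt)"
proof (rule exI[of _ P7], rule exI[of _ 11], intro allI impI, elim conjE)
  fix xs :: "'a list" and gt and w
  assume d: "distinct xs" and po: "is_poset (set xs) gt" and wd: "width (set xs) gt \<le> w"
  have ic: "init_config xs = (0, regs xs [] [])" by (auto simp: init_config_def regs_def fun_eq_iff)
  obtain t q M' where O: "reach gt (0, regs xs [] []) t q (13, regs [] M' [])"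
    "set M' = minimal_elements ({} \<union> set xs) gt" "t \<le> (7*w+4)*length xs + 1" "q \<le> w * length xs"
    using outer[OF po _ wd d, of "{}" "[]"] by (auto simp: minimal_elements_def)
  have tb: "t \<le> 11 * (w * length xs + 1)"
  proof (cases "xs = []")
    case True then show ?thesis using O(3) by (simp add: True)
  next
    case False
    then obtain y where y: "y \<in> set xs" by (cases xs) auto
    have "card {y} \<le> width (set xs) gt"
      by (rule card_le_width) (use y in \<open>auto simp: antichain_def\<close>)
    then have "1 \<le> w" using wd by simp
    then have a: "(7*w+4)*length xs \<le> 11 * w * length xs" by (intro mult_right_mono) auto
    have b: "11*(w*length xs+1) = 11*w*length xs + 11" by simp
    show ?thesis unfolding b using O(3) a by linarith
  qed
  show "\<exists>t. halted P7 (exec P7 gt t (init_config xs)) \<and>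
            t \<le> 11 * (w * length xs + 1) \<and>
            queries P7 gt t (init_config xs) \<le> w * length xs \<and>
            output_of (exec P7 gt t (init_config xs)) = minimal_elements (set xs) gt"
    using O tb unfolding ic reach_def
    by (intro exI[of _ t]) (auto simp: halted_def P7_def output_of_def)
qed

end
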